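(* Let $p$ be an odd prime and $C_p*C_p=\langle a,b : a^p,b^p\rangle$. If $\gamma\in C_p*C_p$ is nontrivial and is not a power of $b$, then the element $\gamma[b,\gamma]$ has infinite order.
   Context: Commutator convention: $[x,y]=x^{-1}y^{-1}xy$, so $\gamma[b,\gamma]=\gamma b^{-1}\gamma^{-1}b\gamma$. *)

theory Defs
  imports "HOL-Algebra.Algebra"
begin

text \<open>The free product C_p * C_p = < a, b | a^p, b^p >, realised by reduced words.
A word is a list of syllables (l, k): letter l (False = a, True = b) with exponent
k in {1..p-1}; consecutive syllables use different letters.\<close>

definition cp_reduced :: "nat \<Rightarrow> (bool \<times> nat) list \<Rightarrow> bool" where
  "cp_reduced p xs \<longleftrightarrow>
     (\<forall>s\<in>set xs. 0 < snd s \<and> snd s < p) \<and>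
     (\<forall>i. Suc i < length xs \<longrightarrow> fst (xs ! i) \<noteq> fst (xs ! Suc i))"

definition cp_push :: "nat \<Rightarrow> (bool \<times> nat) list \<Rightarrow> bool \<times> nat \<Rightarrow> (bool \<times> nat) list" where
  "cp_push p xs s =
     (if xs = [] then [s]
      else if fst (last xs) = fst s then
        (let m = (snd (last xs) + snd s) mod p in
          if m = 0 then butlast xs else butlast xs @ [(fst s, m)])
      else xs @ [s])"

definition cp_mult :: "nat \<Rightarrow> (bool \<times> nat) list \<Rightarrow> (bool \<times> nat) list \<Rightarrow> (bool \<times> nat) list" where
  "cp_mult p xs ys = foldl (cp_push p) xs ys"

definition CpCp :: "nat \<Rightarrow> (bool \<times> nat) list monoid" where
  "CpCp p = \<lparr>carrier = {xs. cp_reduced p xs}, monoid.mult = cp_mult p, one = []\<rparr>"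

definition cp_a :: "(bool \<times> nat) list" where "cp_a = [(False, 1)]"
definition cp_b :: "(bool \<times> nat) list" where "cp_b = [(True, 1)]"

definition commutator :: "('a, 'b) monoid_scheme \<Rightarrow> 'a \<Rightarrow> 'a \<Rightarrow> 'a" where
  "commutator G x y = inv\<^bsub>G\<^esub> x \<otimes>\<^bsub>G\<^esub> inv\<^bsub>G\<^esub> y \<otimes>\<^bsub>G\<^esub> x \<otimes>\<^bsub>G\<^esub> y"

end

theory Submission
  imports Defs
begin


definition valid :: "nat \<Rightarrow> bool \<times> nat \<Rightarrow> bool" where
  "valid p s \<longleftrightarrow> 0 < snd s \<and> snd s < p"

lemma red_iff: "cp_reduced p xs \<longleftrightarrow> (\<forall>s\<in>set xs. valid p s) \<and> successively (\<lambda>x y. fst x \<noteq> fst y) xs"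
  unfolding cp_reduced_def valid_def successively_conv_nth by blast

lemma red_Nil[simp]: "cp_reduced p []"
  by (simp add: red_iff)

lemma red_single[simp]: "cp_reduced p [s] \<longleftrightarrow> valid p s"
  by (simp add: red_iff)

lemma red_append: "cp_reduced p (xs @ ys) \<longleftrightarrow> cp_reduced p xs \<and> cp_reduced p ys \<and>
   (xs = [] \<or> ys = [] \<or> fst (last xs) \<noteq> fst (hd ys))"
  unfolding red_iff successively_append_iff by auto

lemma red_Cons: "cp_reduced p (x # xs) \<longleftrightarrow> valid p x \<and> cp_reduced p xs \<and> (xs = [] \<or> fst x \<noteq> fst (hd xs))"
  using red_append[of p "[x]" xs] by simp

lemma push_Nil[simp]: "cp_push p [] s = [s]"
  by (simp add: cp_push_def)

lemma push_snoc: "cp_push p (ys @ [t]) s =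
   (if fst t = fst s then (let m = (snd t + snd s) mod p in if m = 0 then ys else ys @ [(fst s, m)])
    else ys @ [t, s])"
  by (simp add: cp_push_def Let_def)

lemma push_red:
  assumes "1 < p" "cp_reduced p xs" "valid p s" shows "cp_reduced p (cp_push p xs s)"
proof (cases xs rule: rev_exhaust)
  case Nil then show ?thesis using assms by simp
next
  case (snoc ys t)
  have ys: "cp_reduced p ys" "ys = [] \<or> fst (last ys) \<noteq> fst t" "valid p t"
    using assms(2) snoc by (auto simp: red_append)
  show ?thesis
  proof (cases "fst t = fst s")
    case True
    then show ?thesis using ys assms(1) snoc
      by (auto simp: push_snoc Let_def red_append valid_def)
  next
    case False
    then have "cp_push p xs s = xs @ [s]" using snoc by (simp add: cp_push_def)
    then show ?thesis using assms snoc False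
      by (simp add: red_append red_Cons)
  qed
qed

lemma mod_sum_zero: "(a + b) mod p = (0::nat) \<Longrightarrow> a < p \<Longrightarrow> b < p \<Longrightarrow> 0 < a \<Longrightarrow> a + b = p"
proof -
  assume h: "(a + b) mod p = 0" "a < p" "b < p" "0 < a"
  then obtain q where "a + b = p * q" by (auto elim: dvdE simp: mod_eq_0_iff_dvd)
  moreover have "a + b < 2 * p" "0 < a + b" using h by auto
  ultimately have "p * q < p * 2" "q \<noteq> 0" by auto
  then have "q = 1" by simp
  then show ?thesis using \<open>a + b = p * q\<close> by simp
qed


lemma push_other:
  assumes "cp_reduced p (ys @ [(l,k)])" shows "cp_push p ys (l,j) = ys @ [(l,j)]"
  using assms by (cases "ys = []") (auto simp: cp_push_def red_append)

lemma push_push: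
  assumes y: "cp_reduced p y" and ij: "0<i" "i<p" "0<j" "j<p"
  shows "cp_push p (cp_push p y (l,i)) (l,j) =
         (if (i+j) mod p = 0 then y else cp_push p y (l,(i+j) mod p))"
proof (cases y rule: rev_exhaust)
  case Nil then show ?thesis by (simp add: cp_push_def Let_def)
next
  case (snoc ys t)
  obtain l' k where t: "t = (l',k)" by force
  have vk: "0 < k" "k < p" using y snoc t by (auto simp: red_append valid_def)
  show ?thesis
  proof (cases "l' = l")
    case False
    have 1: "cp_push p y (l,i) = (ys @ [t]) @ [(l,i)]" using snoc t False by (simp add: push_snoc)
    show ?thesis unfolding 1 using snoc t False push_snoc[of p "ys @ [t]" "(l,i)" "(l,j)"]
      by (simp add: Let_def cp_push_def)
  next
    case True
    have m1: "((k + i) mod p + j) mod p = (k + (i + j)) mod p" by (simp add: mod_add_left_eq add.assoc)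
    have m2: "(k + (i + j) mod p) mod p = (k + (i + j)) mod p" by (simp add: mod_add_right_eq)
    show ?thesis
    proof (cases "(k + i) mod p = 0")
      case z: True
      have ki: "k + i = p" using mod_sum_zero[OF z] vk ij by simp
      have 1: "cp_push p y (l,i) = ys" using snoc t True z by (simp add: push_snoc)
      have 2: "cp_push p ys (l,j) = ys @ [(l,j)]" using push_other y snoc t True by blast
      show ?thesis
      proof (cases "(i + j) mod p = 0")
        case True
        have "i + j = p" using mod_sum_zero[OF True] ij by simp
        then have "j = k" using ki by simp
        then show ?thesis using 1 2 True snoc t \<open>l' = l\<close> by simp
      next
        case False
        have "(k + (i + j) mod p) mod p = j" using m2 ki ij
          by (metis add.assoc mod_add_self1 mod_less)
        then show ?thesis using 1 2 False snoc t \<open>l' = l\<close> ij by (simp add: push_snoc Let_def)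
      qed
    next
      case nz: False
      have 1: "cp_push p y (l,i) = ys @ [(l, (k+i) mod p)]" using snoc t True nz by (simp add: push_snoc Let_def)
      show ?thesis
      proof (cases "(i + j) mod p = 0")
        case True
        have "i + j = p" using mod_sum_zero[OF True] ij by simp
        then have "(k + (i + j)) mod p = k" using vk by simp
        then show ?thesis unfolding 1 using True snoc t \<open>l' = l\<close> m1 vk by (simp add: push_snoc Let_def)
      next
        case False
        then show ?thesis unfolding 1 using snoc t \<open>l' = l\<close> m1 m2 by (simp add: push_snoc Let_def)
      qed
    qed
  qed
qed


lemma foldl_red: "cp_reduced p x \<Longrightarrow> 1 < p \<Longrightarrow> \<forall>s\<in>set r. valid p s \<Longrightarrow> cp_reduced p (foldl (cp_push p) x r)"
  by (induction r arbitrary: x) (simp_all add: push_red)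

lemma red_valid: "cp_reduced p r \<Longrightarrow> \<forall>s\<in>set r. valid p s"
  by (simp add: red_iff)

lemma key:
  assumes p: "1 < p" and x: "cp_reduced p x" and r: "cp_reduced p r" and s: "valid p s"
  shows "foldl (cp_push p) x (cp_push p r s) = cp_push p (foldl (cp_push p) x r) s"
proof (cases r rule: rev_exhaust)
  case Nil then show ?thesis by simp
next
  case (snoc r' t)
  obtain l' k where t: "t = (l',k)" by force
  obtain l j where sj: "s = (l,j)" by force
  show ?thesis
  proof (cases "l' = l")
    case False
    then have "cp_push p r s = r @ [s]" using snoc t sj by (simp add: cp_push_def)
    then show ?thesis by simp
  next
    case True
    have r': "cp_reduced p r'" and vk: "0 < k" "k < p" using r snoc t by (auto simp: red_append valid_def)
    have y: "cp_reduced p (foldl (cp_push p) x r')" using foldl_red[OF x p] r' red_valid by blast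
    have vj: "0 < j" "j < p" using s sj by (auto simp: valid_def)
    have pp: "cp_push p (cp_push p (foldl (cp_push p) x r') (l,k)) (l,j) =
         (if (k+j) mod p = 0 then foldl (cp_push p) x r' else cp_push p (foldl (cp_push p) x r') (l,(k+j) mod p))"
      using push_push[OF y vk vj] .
    show ?thesis using pp snoc t sj True by (simp add: push_snoc Let_def)
  qed
qed

lemma foldl_reduce:
  assumes p: "1 < p" and x: "cp_reduced p x" and y: "cp_reduced p y"
  shows "\<forall>s\<in>set z. valid p s \<Longrightarrow> foldl (cp_push p) x (foldl (cp_push p) y z) = foldl (cp_push p) x (y @ z)"
proof (induction z rule: rev_induct)
  case Nil then show ?case by simp
next
  case (snoc s z)
  have fz: "cp_reduced p (foldl (cp_push p) y z)" using foldl_red[OF y p] snoc by simp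
  have "foldl (cp_push p) x (foldl (cp_push p) y (z @ [s]))
      = foldl (cp_push p) x (cp_push p (foldl (cp_push p) y z) s)" by simp
  also have "\<dots> = cp_push p (foldl (cp_push p) x (foldl (cp_push p) y z)) s"
    using key[OF p x fz] snoc by simp
  also have "\<dots> = foldl (cp_push p) x (y @ z @ [s])" using snoc by simp
  finally show ?case by simp
qed

lemma mult_assoc:
  assumes "1 < p" "cp_reduced p x" "cp_reduced p y" "cp_reduced p z"
  shows "cp_mult p (cp_mult p x y) z = cp_mult p x (cp_mult p y z)"
  unfolding cp_mult_def using foldl_reduce[OF assms(1,2,3)] red_valid[OF assms(4)] by simp

lemma mult_concat: "cp_reduced p (x @ y) \<Longrightarrow> cp_mult p x y = x @ y"
proof (induction y rule: rev_induct)
  case Nil then show ?case by (simp add: cp_mult_def)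
next
  case (snoc s y)
  have r: "cp_reduced p (x @ y)" using snoc.prems red_append[of p "x@y" "[s]"] by simp
  have d: "x @ y = [] \<or> fst (last (x @ y)) \<noteq> fst s" using snoc.prems red_append[of p "x@y" "[s]"] by simp
  have "cp_mult p x (y @ [s]) = cp_push p (x @ y) s" using snoc.IH[OF r] by (simp add: cp_mult_def)
  also have "\<dots> = x @ y @ [s]" using d by (auto simp: cp_push_def)
  finally show ?case by simp
qed

definition invs :: "nat \<Rightarrow> bool \<times> nat \<Rightarrow> bool \<times> nat" where "invs p s = (fst s, p - snd s)"
definition invw :: "nat \<Rightarrow> (bool \<times> nat) list \<Rightarrow> (bool \<times> nat) list" where
  "invw p xs = rev (map (invs p) xs)"

lemma invw_red: "cp_reduced p xs \<Longrightarrow> cp_reduced p (invw p xs)"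
  unfolding red_iff invw_def successively_rev successively_map
  by (auto simp: invs_def valid_def elim: successively_mono)

lemma invw_invw: "cp_reduced p xs \<Longrightarrow> invw p (invw p xs) = xs"
  unfolding invw_def rev_map[symmetric] rev_rev_ident map_map red_iff
  by (rule map_idI) (auto simp: invs_def valid_def)

lemma invw_append[simp]: "invw p (xs @ ys) = invw p ys @ invw p xs"
  by (simp add: invw_def)

lemma invw_simps[simp]: "invw p [] = []" "invw p (x # xs) = invw p xs @ [invs p x]"
  by (simp_all add: invw_def)

lemma mult_invw: "cp_reduced p w \<Longrightarrow> cp_mult p w (invw p w) = []"
proof (induction w rule: rev_induct)
  case Nil then show ?case by (simp add: cp_mult_def)
next
  case (snoc t w)
  have w: "cp_reduced p w" and vt: "valid p t" using snoc.prems by (auto simp: red_append)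
  have "cp_push p (w @ [t]) (invs p t) = w" using vt
    by (simp add: push_snoc invs_def valid_def Let_def)
  then have "cp_mult p (w @ [t]) (invw p (w @ [t])) = cp_mult p w (invw p w)"
    by (simp add: cp_mult_def)
  then show ?case using snoc.IH[OF w] by simp
qed

lemma CpCp_group: assumes "1 < p" shows "group (CpCp p)"
proof (rule groupI)
  fix x y assume "x \<in> carrier (CpCp p)" "y \<in> carrier (CpCp p)"
  then show "x \<otimes>\<^bsub>CpCp p\<^esub> y \<in> carrier (CpCp p)"
    using foldl_red assms red_valid by (auto simp: CpCp_def cp_mult_def)
next
  show "\<one>\<^bsub>CpCp p\<^esub> \<in> carrier (CpCp p)" by (simp add: CpCp_def)
next
  fix x y z assume "x \<in> carrier (CpCp p)" "y \<in> carrier (CpCp p)" "z \<in> carrier (CpCp p)"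
  then show "x \<otimes>\<^bsub>CpCp p\<^esub> y \<otimes>\<^bsub>CpCp p\<^esub> z = x \<otimes>\<^bsub>CpCp p\<^esub> (y \<otimes>\<^bsub>CpCp p\<^esub> z)"
    using mult_assoc[OF assms] by (simp add: CpCp_def)
next
  fix x assume "x \<in> carrier (CpCp p)"
  then show "\<one>\<^bsub>CpCp p\<^esub> \<otimes>\<^bsub>CpCp p\<^esub> x = x"
    using mult_concat[of p "[]" x] by (simp add: CpCp_def)
next
  fix x assume x: "x \<in> carrier (CpCp p)"
  then have r: "cp_reduced p x" by (simp add: CpCp_def)
  show "\<exists>y\<in>carrier (CpCp p). y \<otimes>\<^bsub>CpCp p\<^esub> x = \<one>\<^bsub>CpCp p\<^esub>"
    apply (rule bexI[of _ "invw p x"])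
    using mult_invw[OF invw_red[OF r]] invw_invw[OF r] invw_red[OF r] by (simp_all add: CpCp_def)
qed


lemma CpCp_simps[simp]: "x \<in> carrier (CpCp p) \<longleftrightarrow> cp_reduced p x"
  "x \<otimes>\<^bsub>CpCp p\<^esub> y = cp_mult p x y" "\<one>\<^bsub>CpCp p\<^esub> = []"
  by (simp_all add: CpCp_def)

lemma (in group) conj_pow:
  assumes c: "c \<in> carrier G" and x: "x \<in> carrier G"
  shows "(inv c \<otimes> x \<otimes> c) [^] (n::nat) = inv c \<otimes> x [^] n \<otimes> c"
proof (induction n)
  case 0 then show ?case using c by simp
next
  case (Suc n)
  have cc: "\<And>y. y \<in> carrier G \<Longrightarrow> c \<otimes> (inv c \<otimes> y) = y" using c by (simp add: m_assoc[symmetric])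
  have "(inv c \<otimes> x \<otimes> c) [^] Suc n = (inv c \<otimes> x [^] n \<otimes> c) \<otimes> (inv c \<otimes> x \<otimes> c)"
    using Suc by simp
  also have "\<dots> = inv c \<otimes> x [^] n \<otimes> (c \<otimes> (inv c \<otimes> (x \<otimes> c)))" using c x by (simp add: m_assoc)
  also have "\<dots> = inv c \<otimes> x [^] Suc n \<otimes> c" using c x cc by (simp add: m_assoc)
  finally show ?case .
qed

lemma cyc:
  assumes p: "1 < p" and h: "cp_reduced p h" "h \<noteq> []" "fst (hd h) \<noteq> fst (last h)"
  shows "h [^]\<^bsub>CpCp p\<^esub> (n::nat) = concat (replicate n h) \<and> cp_reduced p (concat (replicate n h))"
proof (induction n)
  case 0 then show ?case by simp
next
  case (Suc n)
  interpret G: group "CpCp p" using CpCp_group[OF p] .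
  have hd: "n > 0 \<Longrightarrow> hd (concat (replicate n h)) = hd h" using h(2) by (cases n) auto
  have r: "cp_reduced p (h @ concat (replicate n h))" using Suc h hd
    by (cases "n = 0") (auto simp: red_append)
  have "h [^]\<^bsub>CpCp p\<^esub> Suc n = cp_mult p h (h [^]\<^bsub>CpCp p\<^esub> n)"
    using G.nat_pow_Suc2[of h n] h by simp
  then show ?case using Suc mult_concat[OF r] r by simp
qed

lemma cyc_ne:
  assumes p: "1 < p" and h: "cp_reduced p h" "h \<noteq> []" "fst (hd h) \<noteq> fst (last h)" and n: "0 < n"
  shows "h [^]\<^bsub>CpCp p\<^esub> (n::nat) \<noteq> []"
  using cyc[OF p h, of n] n h(2) by (cases n) auto

lemma palin:
  assumes p: "1 < p" and n: "0 < n"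
  shows "cp_reduced p h \<Longrightarrow> h \<noteq> [] \<Longrightarrow> h [^]\<^bsub>CpCp p\<^esub> (n::nat) = [] \<Longrightarrow> \<exists>u s. h = u @ [s] @ invw p u"
proof (induction "length h" arbitrary: h rule: less_induct)
  case less
  interpret G: group "CpCp p" using CpCp_group[OF p] .
  show ?case
  proof (cases "length h = 1")
    case True
    then obtain s where "h = [s]" by (cases h) auto
    then show ?thesis by (intro exI[of _ "[]"]) auto
  next
    case False
    then obtain s1 m' where hm': "h = s1 # m'" "m' \<noteq> []" using less.prems(2) by (cases h) auto
    then obtain m s2 where hm: "h = s1 # m @ [s2]" by (metis rev_exhaust append_Cons)
    have eq: "fst s1 = fst s2"
    proof (rule ccontr)
      assume "fst s1 \<noteq> fst s2"
      then show False using cyc_ne[OF p less.prems(1,2) _ n] less.prems(3) hm by simp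
    qed
    obtain l k1 where s1: "s1 = (l,k1)" by force
    obtain k2 where s2: "s2 = (l,k2)" using eq s1 by (cases s2) auto
    have red1: "cp_reduced p (s1 # m)" and vs2: "valid p s2"
      using less.prems(1) hm red_append[of p "s1 # m" "[s2]"] by auto
    have mne: "m \<noteq> []" using less.prems(1) hm eq by (auto simp: red_Cons)
    have m: "cp_reduced p m" "fst (hd m) \<noteq> l" using red1 mne s1 by (auto simp: red_Cons)
    have vk: "0 < k1" "k1 < p" "0 < k2" "k2 < p" using red1 vs2 s1 s2 by (auto simp: red_Cons valid_def)
    define c where "c = [s1]"
    have cC: "cp_reduced p c" using red1 c_def by (simp add: red_Cons)
    define rest where "rest = (if (k2 + k1) mod p = 0 then m else m @ [(l, (k2+k1) mod p)])"
    have hc: "cp_mult p h c = s1 # rest"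
      using push_snoc[of p "s1 # m" s2 s1] unfolding c_def rest_def
      by (simp add: hm cp_mult_def s1 s2 Let_def)
    have redr: "cp_reduced p (s1 # rest)"
      using hc G.m_closed[of h c] less.prems(1) cC by simp
    then have rr: "cp_reduced p rest" by (simp add: red_Cons)
    have crest: "cp_mult p c rest = s1 # rest" using mult_concat[of p c rest] redr c_def by simp
    have hrest: "rest = inv\<^bsub>CpCp p\<^esub> c \<otimes>\<^bsub>CpCp p\<^esub> h \<otimes>\<^bsub>CpCp p\<^esub> c"
    proof -
      have ic: "cp_reduced p (inv\<^bsub>CpCp p\<^esub> c)" using G.inv_closed[of c] cC by simp
      show ?thesis
      using G.inv_solve_left[of rest c "h \<otimes>\<^bsub>CpCp p\<^esub> c"] less.prems(1) cC rr hc crest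
        mult_assoc[OF p ic less.prems(1) cC] redr
      by simp
    qed
    have "rest [^]\<^bsub>CpCp p\<^esub> n = inv\<^bsub>CpCp p\<^esub> c \<otimes>\<^bsub>CpCp p\<^esub> h [^]\<^bsub>CpCp p\<^esub> n \<otimes>\<^bsub>CpCp p\<^esub> c"
      unfolding hrest using G.conj_pow cC less.prems(1) by simp
    also have "\<dots> = []" using less.prems(3) cC G.r_one[of "inv\<^bsub>CpCp p\<^esub> c"] G.l_inv[of c] G.inv_closed[of c] by simp
    finally have rn: "rest [^]\<^bsub>CpCp p\<^esub> n = []" .
    show ?thesis
    proof (cases "(k2 + k1) mod p = 0")
      case True
      have "k2 + k1 = p" using mod_sum_zero[OF True] vk by simp
      then have s2i: "s2 = invs p s1" using s1 s2 by (simp add: invs_def)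
      have "length m < length h" using hm by simp
      then obtain u s where "m = u @ [s] @ invw p u" using less.hyps[of m] m mne rn True rest_def by auto
      then show ?thesis using hm s2i by (intro exI[of _ "s1 # u"] exI[of _ s]) simp
    next
      case False
      have "rest [^]\<^bsub>CpCp p\<^esub> n \<noteq> []"
        using cyc_ne[OF p rr _ _ n] False rest_def m mne by (simp add: hd_append)
      then show ?thesis using rn by simp
    qed
  qed
qed


lemma (in group) gen_conj:
  fixes e f :: nat
  assumes b: "b \<in> carrier G" and w: "w \<in> carrier G"
  defines "P \<equiv> b [^] e" and "Q \<equiv> b [^] f"
  shows "(P \<otimes> w \<otimes> Q) \<otimes> (inv b \<otimes> inv (P \<otimes> w \<otimes> Q) \<otimes> b \<otimes> (P \<otimes> w \<otimes> Q))
       = P \<otimes> (w \<otimes> inv b \<otimes> inv w \<otimes> b \<otimes> w \<otimes> (Q \<otimes> P)) \<otimes> inv P"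
proof -
  have PQ: "P \<in> carrier G" "Q \<in> carrier G" using b by (simp_all add: P_def Q_def)
  have c1: "Q \<otimes> inv b = inv b \<otimes> Q"
  proof -
    have "b \<otimes> Q = Q \<otimes> b" unfolding Q_def using b nat_pow_Suc2[of b f] nat_pow_Suc[of b f] by simp
    then show ?thesis using b PQ
      by (metis inv_solve_left inv_solve_right m_assoc m_closed inv_closed)
  qed
  have c2: "inv P \<otimes> b = b \<otimes> inv P"
  proof -
    have "b \<otimes> P = P \<otimes> b" unfolding P_def using b nat_pow_Suc2[of b e] nat_pow_Suc[of b e] by simp
    then show ?thesis using b PQ
      by (metis inv_solve_left inv_solve_right m_assoc m_closed inv_closed)
  qed
  have cx: "\<And>x z. x \<in> carrier G \<Longrightarrow> z \<in> carrier G \<Longrightarrow> x \<otimes> (inv x \<otimes> z) = z"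
    by (simp add: m_assoc[symmetric])
  have cy: "\<And>x z. x \<in> carrier G \<Longrightarrow> z \<in> carrier G \<Longrightarrow> inv x \<otimes> (x \<otimes> z) = z"
    by (simp add: m_assoc[symmetric])
  have c1': "\<And>z. z \<in> carrier G \<Longrightarrow> Q \<otimes> (inv b \<otimes> z) = inv b \<otimes> (Q \<otimes> z)"
    using c1 PQ b by (simp add: m_assoc[symmetric])
  have c2': "\<And>z. z \<in> carrier G \<Longrightarrow> inv P \<otimes> (b \<otimes> z) = b \<otimes> (inv P \<otimes> z)"
    using c2 PQ b by (simp add: m_assoc[symmetric])
  have "(P \<otimes> w \<otimes> Q) \<otimes> (inv b \<otimes> inv (P \<otimes> w \<otimes> Q) \<otimes> b \<otimes> (P \<otimes> w \<otimes> Q))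
      = P \<otimes> (w \<otimes> (Q \<otimes> (inv b \<otimes> (inv Q \<otimes> (inv w \<otimes> (inv P \<otimes> (b \<otimes> (P \<otimes> (w \<otimes> Q)))))))))"
    using PQ b w by (simp add: m_assoc inv_mult_group)
  also have "\<dots> = P \<otimes> (w \<otimes> (inv b \<otimes> (inv w \<otimes> (b \<otimes> (w \<otimes> Q)))))"
    using PQ b w by (simp add: c1' c2' cx cy)
  also have "\<dots> = P \<otimes> (w \<otimes> inv b \<otimes> inv w \<otimes> b \<otimes> w \<otimes> (Q \<otimes> P)) \<otimes> inv P"
    using PQ b w by (simp add: m_assoc cx)
  finally show ?thesis .
qed

definition bl :: "nat \<Rightarrow> (bool \<times> nat) list" where "bl k = (if k = 0 then [] else [(True, k)])"

lemma bpow: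
  assumes p: "1 < p" shows "k < p \<Longrightarrow> cp_b [^]\<^bsub>CpCp p\<^esub> k = bl k"
proof (induction k)
  case 0 then show ?case by (simp add: bl_def)
next
  case (Suc k)
  then show ?case by (cases "k = 0") (simp_all add: bl_def cp_b_def cp_mult_def cp_push_def)
qed

lemma bpow_p:
  assumes p: "1 < p" shows "cp_b [^]\<^bsub>CpCp p\<^esub> p = []"
proof -
  obtain q where q: "p = Suc q" using p by (cases p) auto
  have "cp_b [^]\<^bsub>CpCp p\<^esub> (Suc q) = []" using bpow[OF p, of q] p q
    by (simp add: bl_def cp_b_def cp_mult_def cp_push_def)
  then show ?thesis using q by simp
qed

lemma bpow_mod:
  assumes p: "1 < p" shows "cp_b [^]\<^bsub>CpCp p\<^esub> k = bl (k mod p)"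
proof -
  interpret G: group "CpCp p" using CpCp_group[OF p] .
  have bC: "cp_b \<in> carrier (CpCp p)" using p by (simp add: cp_b_def valid_def)
  have "k = p * (k div p) + k mod p" by simp
  then have "cp_b [^]\<^bsub>CpCp p\<^esub> k = (cp_b [^]\<^bsub>CpCp p\<^esub> p) [^]\<^bsub>CpCp p\<^esub> (k div p) \<otimes>\<^bsub>CpCp p\<^esub> cp_b [^]\<^bsub>CpCp p\<^esub> (k mod p)"
    using G.nat_pow_mult[OF bC] G.nat_pow_pow[OF bC] by metis
  also have "\<dots> = bl (k mod p)"
    using bpow_p[OF p] bpow[OF p, of "k mod p"] p G.l_one[of "bl (k mod p)"]
      G.nat_pow_closed[OF bC, of "k mod p"] G.nat_pow_one[of "k div p"] by simp
  finally show ?thesis .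
qed


lemma strip_front:
  assumes r: "cp_reduced p g" and ne: "g \<noteq> []" and nb: "\<forall>k. g \<noteq> [(True,k)]"
  shows "\<exists>e g1. g = bl e @ g1 \<and> e < p \<and> g1 \<noteq> [] \<and> \<not> fst (hd g1) \<and> cp_reduced p g1"
proof -
  obtain s rest where g: "g = s # rest" using ne by (cases g) auto
  have p0: "0 < p" using r g by (auto simp: red_Cons valid_def)
  show ?thesis
  proof (cases "fst s")
    case True
    have s: "s = (True, snd s)" "0 < snd s" "snd s < p" using True r g by (auto simp: red_Cons valid_def prod_eq_iff)
    have "rest \<noteq> []" using nb g s(1) by auto
    then show ?thesis using r g s True
      by (intro exI[of _ "snd s"] exI[of _ rest]) (auto simp: bl_def red_Cons)
  next
    case False
    then show ?thesis using r g p0 by (intro exI[of _ 0] exI[of _ g]) (auto simp: bl_def)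
  qed
qed

lemma strip_back:
  assumes r: "cp_reduced p g" and ne: "g \<noteq> []" and h: "\<not> fst (hd g)"
  shows "\<exists>f w. g = w @ bl f \<and> f < p \<and> w \<noteq> [] \<and> \<not> fst (hd w) \<and> \<not> fst (last w) \<and> cp_reduced p w"
proof -
  obtain ys t where g: "g = ys @ [t]" using ne by (cases g rule: rev_exhaust) auto
  have p0: "0 < p" using r g by (auto simp: red_append valid_def)
  show ?thesis
  proof (cases "fst t")
    case True
    have t: "t = (True, snd t)" "0 < snd t" "snd t < p" using True r g by (auto simp: red_append valid_def prod_eq_iff)
    have ys: "ys \<noteq> []" using h g True by auto
    have "\<not> fst (last ys)" using r g ys True by (auto simp: red_append)
    then show ?thesis using r g t ys h
      by (intro exI[of _ "snd t"] exI[of _ ys]) (auto simp: bl_def red_append)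
  next
    case False
    then show ?thesis using r g h p0 by (intro exI[of _ 0] exI[of _ g]) (auto simp: bl_def)
  qed
qed

lemma not_selfinv:
  assumes r: "cp_reduced p w" and ne: "w \<noteq> []" and odd: "odd p"
  shows "invw p w \<noteq> w"
proof
  assume eq: "invw p w = w"
  define k where "k = length w"
  have nth: "\<And>j. j < k \<Longrightarrow> w ! j = invs p (w ! (k - Suc j))"
  proof -
    fix j assume "j < k"
    then have "invw p w ! j = invs p (w ! (k - Suc j))" unfolding invw_def k_def by (simp add: rev_nth)
    then show "w ! j = invs p (w ! (k - Suc j))" using eq by simp
  qed
  define i where "i = (k - 1) div 2"
  have k0: "0 < k" using ne k_def by simp
  show False
  proof (cases "odd k")
    case True
    then have "k - Suc i = i" "i < k" unfolding i_def using k0 by (auto elim!: oddE)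
    then have "w ! i = invs p (w ! i)" using nth by metis
    then have "snd (w ! i) = p - snd (w ! i)" by (metis invs_def snd_conv)
    moreover have "snd (w ! i) < p" using r \<open>i < k\<close> k_def by (auto simp: red_iff valid_def)
    ultimately have "p = 2 * snd (w ! i)" by linarith
    then show False using odd by simp
  next
    case False
    have "k - Suc i = Suc i" unfolding i_def using k0 False by presburger
    moreover have "Suc i < k" unfolding i_def using k0 False by presburger
    ultimately have "k - Suc i = Suc i" "Suc i < k" by auto
    then have "w ! i = invs p (w ! Suc i)" using nth by (metis Suc_lessD)
    then have "fst (w ! i) = fst (w ! Suc i)" by (simp add: invs_def)
    moreover have "fst (w ! i) \<noteq> fst (w ! Suc i)"
      using successively_nth[of _ w i] r \<open>Suc i < k\<close> k_def by (auto simp: red_iff)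
    ultimately show False by simp
  qed
qed

lemma (in group) conj_one:
  assumes "c \<in> carrier G" "x \<in> carrier G" "inv c \<otimes> x \<otimes> c = \<one>" shows "x = \<one>"
proof -
  have e: "inv c \<otimes> (x \<otimes> c) = \<one>" using assms by (simp add: m_assoc)
  have "x \<otimes> c = c \<otimes> \<one>" using inv_solve_left'[of "\<one>" c "x \<otimes> c"] e assms(1,2) one_closed m_closed by blast
  then have "x \<otimes> c = \<one> \<otimes> c" using assms by simp
  then show ?thesis using r_cancel[of c x "\<one>"] assms by simp
qed


theorem mainTheorem14:
  fixes p :: nat and \<gamma> :: "(bool \<times> nat) list"
  assumes "Factorial_Ring.prime p" and "odd p"
    and "\<gamma> \<in> carrier (CpCp p)"
    and "\<gamma> \<noteq> \<one>\<^bsub>CpCp p\<^esub>"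
    and "\<not> (\<exists>n::int. \<gamma> = cp_b [^]\<^bsub>CpCp p\<^esub> n)"
  shows "\<forall>n::nat. n > 0 \<longrightarrow>
           (\<gamma> \<otimes>\<^bsub>CpCp p\<^esub> commutator (CpCp p) cp_b \<gamma>) [^]\<^bsub>CpCp p\<^esub> n \<noteq> \<one>\<^bsub>CpCp p\<^esub>"
proof (intro allI impI)
  fix n :: nat assume n: "n > 0"
  have p: "1 < p" using assms(1) prime_gt_1_nat by blast
  interpret G: group "CpCp p" using CpCp_group[OF p] .
  have rg: "cp_reduced p \<gamma>" using assms(3) by simp
  have gne: "\<gamma> \<noteq> []" using assms(4) by simp
  have bC: "cp_reduced p cp_b" using p by (simp add: cp_b_def valid_def)
  have bCc: "cp_b \<in> carrier (CpCp p)" using bC by simp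
  have nb: "\<forall>k. \<gamma> \<noteq> [(True,k)]"
  proof (intro allI notI)
    fix k assume gk: "\<gamma> = [(True,k)]"
    then have "0 < k" "k < p" using rg by (auto simp: valid_def)
    then have "\<gamma> = cp_b [^]\<^bsub>CpCp p\<^esub> (int k)" using gk bpow[OF p, of k] by (simp add: bl_def int_pow_int)
    then show False using assms(5) by blast
  qed
  obtain e g1 where eg: "\<gamma> = bl e @ g1" "e < p" "g1 \<noteq> []" "\<not> fst (hd g1)" "cp_reduced p g1"
    using strip_front[OF rg gne nb] by blast
  obtain f w where fw: "g1 = w @ bl f" "f < p" "w \<noteq> []" "\<not> fst (hd w)" "\<not> fst (last w)" "cp_reduced p w"
    using strip_back[OF eg(5) eg(3) eg(4)] by blast
  define P where "P = cp_b [^]\<^bsub>CpCp p\<^esub> e"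
  define Q where "Q = cp_b [^]\<^bsub>CpCp p\<^esub> f"
  have P: "P = bl e" using bpow[OF p eg(2)] P_def by simp
  have Q: "Q = bl f" using bpow[OF p fw(2)] Q_def by simp
  have gam: "\<gamma> = bl e @ w @ bl f" using eg fw by simp
  have r1: "cp_reduced p (bl e @ w)" using rg gam red_append[of p "bl e @ w" "bl f"] by simp
  have gprod: "\<gamma> = P \<otimes>\<^bsub>CpCp p\<^esub> w \<otimes>\<^bsub>CpCp p\<^esub> Q"
    using mult_concat[OF r1] mult_concat[of p "bl e @ w" "bl f"] rg gam P Q by simp
  define W where "W = invw p w"
  have W: "cp_reduced p W" "W \<noteq> []" "\<not> fst (hd W)" "\<not> fst (last W)"
    using invw_red[OF fw(6)] fw(3,4,5) unfolding W_def invw_def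
    by (auto simp: invs_def hd_rev last_rev hd_map last_map)
  have invw_w: "inv\<^bsub>CpCp p\<^esub> w = W"
    using G.inv_equality[of W w] mult_invw[OF W(1)] invw_invw[OF fw(6)] W(1) fw(6) W_def by simp
  have invb: "inv\<^bsub>CpCp p\<^esub> cp_b = [(True, p - 1)]"
    using G.inv_equality[of "[(True, p - 1)]" cp_b] bC p
    by (simp add: cp_b_def cp_mult_def cp_push_def valid_def)
  define c where "c = (f + e) mod p"
  have QP: "Q \<otimes>\<^bsub>CpCp p\<^esub> P = bl c"
    unfolding P_def Q_def c_def using G.nat_pow_mult[OF bCc] bpow_mod[OF p] by simp
  define L where "L = w @ [(True, p - 1)] @ W @ [(True, 1)] @ w @ bl c"
  have cp: "c < p" using p c_def by simp
  have rL: "cp_reduced p L" unfolding L_def using fw(3-6) W p cp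
    by (auto simp: red_append red_Cons valid_def bl_def hd_append)
  have r5: "cp_reduced p (w @ [(True, p - 1)] @ W @ [(True, 1)] @ w)"
    using rL red_append[of p "w @ [(True, p - 1)] @ W @ [(True, 1)] @ w" "bl c"] unfolding L_def by simp
  have r4: "cp_reduced p (w @ [(True, p - 1)] @ W @ [(True, 1)])"
    using r5 red_append[of p "w @ [(True, p - 1)] @ W @ [(True, 1)]" w] by simp
  have r3: "cp_reduced p (w @ [(True, p - 1)] @ W)"
    using r4 red_append[of p "w @ [(True, p - 1)] @ W" "[(True, 1)]"] by simp
  have r2: "cp_reduced p (w @ [(True, p - 1)])"
    using r3 red_append[of p "w @ [(True, p - 1)]" W] by simp
  have hh: "w \<otimes>\<^bsub>CpCp p\<^esub> inv\<^bsub>CpCp p\<^esub> cp_b \<otimes>\<^bsub>CpCp p\<^esub> inv\<^bsub>CpCp p\<^esub> w \<otimes>\<^bsub>CpCp p\<^esub> cp_b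
      \<otimes>\<^bsub>CpCp p\<^esub> w \<otimes>\<^bsub>CpCp p\<^esub> (Q \<otimes>\<^bsub>CpCp p\<^esub> P) = L"
    unfolding invw_w invb QP L_def
    using mult_concat[OF r2] mult_concat[of p "w @ [(True, p - 1)]" W] r3
      mult_concat[of p "w @ [(True, p - 1)] @ W" "[(True,1)]"] r4
      mult_concat[of p "w @ [(True, p - 1)] @ W @ [(True,1)]" w] r5
      mult_concat[of p "w @ [(True, p - 1)] @ W @ [(True,1)] @ w" "bl c"] rL[unfolded L_def]
    by (simp add: cp_b_def)
  have gform: "\<gamma> \<otimes>\<^bsub>CpCp p\<^esub> commutator (CpCp p) cp_b \<gamma> = P \<otimes>\<^bsub>CpCp p\<^esub> L \<otimes>\<^bsub>CpCp p\<^esub> inv\<^bsub>CpCp p\<^esub> P"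
    unfolding commutator_def gprod hh[symmetric] P_def Q_def
    using G.gen_conj[OF bCc, of w] fw(6) by simp
  have PC: "cp_reduced p P" using P eg(2) by (auto simp: bl_def valid_def)
  show "(\<gamma> \<otimes>\<^bsub>CpCp p\<^esub> commutator (CpCp p) cp_b \<gamma>) [^]\<^bsub>CpCp p\<^esub> n \<noteq> \<one>\<^bsub>CpCp p\<^esub>"
  proof
    assume h: "(\<gamma> \<otimes>\<^bsub>CpCp p\<^esub> commutator (CpCp p) cp_b \<gamma>) [^]\<^bsub>CpCp p\<^esub> n = \<one>\<^bsub>CpCp p\<^esub>"
    have ip: "inv\<^bsub>CpCp p\<^esub> P \<in> carrier (CpCp p)" using PC G.inv_closed[of P] by simp
    have "(inv\<^bsub>CpCp p\<^esub> (inv\<^bsub>CpCp p\<^esub> P) \<otimes>\<^bsub>CpCp p\<^esub> L \<otimes>\<^bsub>CpCp p\<^esub> inv\<^bsub>CpCp p\<^esub> P) [^]\<^bsub>CpCp p\<^esub> n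
        = inv\<^bsub>CpCp p\<^esub> (inv\<^bsub>CpCp p\<^esub> P) \<otimes>\<^bsub>CpCp p\<^esub> L [^]\<^bsub>CpCp p\<^esub> n \<otimes>\<^bsub>CpCp p\<^esub> inv\<^bsub>CpCp p\<^esub> P"
      using G.conj_pow[OF ip, of L] rL by simp
    then have "inv\<^bsub>CpCp p\<^esub> (inv\<^bsub>CpCp p\<^esub> P) \<otimes>\<^bsub>CpCp p\<^esub> L [^]\<^bsub>CpCp p\<^esub> n \<otimes>\<^bsub>CpCp p\<^esub> inv\<^bsub>CpCp p\<^esub> P = \<one>\<^bsub>CpCp p\<^esub>"
      using h gform G.inv_inv[of P] PC by simp
    then have Ln: "L [^]\<^bsub>CpCp p\<^esub> n = []" using G.conj_one[OF ip, of "L [^]\<^bsub>CpCp p\<^esub> n"] rL G.nat_pow_closed[of L n] by simp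
    have Lne: "L \<noteq> []" unfolding L_def by simp
    obtain u s where us: "L = u @ [s] @ invw p u" using palin[OF p n rL Lne Ln] by blast
    have ru: "cp_reduced p u" using rL us red_append[of p u] by simp
    show False
    proof (cases "c = 0")
      case False
      have lastL: "last L = (True, c)" unfolding L_def using False by (simp add: bl_def)
      have hdL: "hd L = hd w" unfolding L_def using fw(3) by simp
      show False
      proof (cases "u = []")
        case True
        then show False using us unfolding L_def by simp
      next
        case un: False
        have "hd L = hd u" using us un by simp
        moreover have "last L = invs p (hd u)" using us un
          by (simp add: invw_def last_rev hd_map)
        ultimately show False using lastL hdL fw(4) by (simp add: invs_def)
      qed
    next
      case True
      have L0: "L = w @ [(True, p - 1)] @ W @ [(True, 1)] @ w" unfolding L_def using True by (simp add: bl_def)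
      have "invw p L = W @ [(True, p - 1)] @ w @ [(True, 1)] @ W"
        unfolding L0 using invw_invw[OF fw(6)] p W_def by (simp add: invs_def)
      moreover have "invw p L = u @ [invs p s] @ invw p u"
        unfolding us using invw_invw[OF ru] by simp
      moreover have len: "length L = 3 * length w + 2" unfolding L0 W_def by (simp add: invw_def)
      moreover have "length L = 2 * length u + 1" unfolding us by (simp add: invw_def)
      ultimately have k: "length w \<le> length u" by simp
      have "take (length w) L = w" unfolding L0 by simp
      moreover have "take (length w) (invw p L) = W"
        using \<open>invw p L = W @ _\<close> W_def by (simp add: invw_def)
      moreover have "take (length w) L = take (length w) u" unfolding us using k by simp
      moreover have "take (length w) (invw p L) = take (length w) u"
        using \<open>invw p L = u @ [invs p s] @ invw p u\<close> k by simp
      ultimately have "invw p w = w" using W_def by simp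
      then show False using not_selfinv[OF fw(6) fw(3) assms(2)] by simp
    qed
  qed
qed

end
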